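(* Let $P\subseteq\mathsf{Pos}(R)$, $\alpha\in\Sigma$, and let $T$ be the transition tree of $P$. Then: every $\odot$-live node is in $T$ and has its left child in $T$; every $\odot$-live node that $\odot$-dominates some node of $N^\odot(P,\alpha)$ is a branching node of $T$; and every node that weakly $\odot$-dominates a branching node of $T$ is itself a branching node of $T$.
   Context: A regular expression $R$ over $\Sigma$ is identified with its parse tree; $\odot$-nodes $v$ have children $\mathsf{left}(v),\mathsf{right}(v)$. Positions are the character-labeled leaves, $\mathsf{Pos}_\alpha$ those labeled $\alpha$. $\mathsf{first}(v)$, $\mathsf{last}(v)$ are the sets of positions occurring first/last in a sequence of positions generated by the subexpression rooted at $v$; $\mathsf{firstextent}(p)=\{v:p\in\mathsf{first}(v)\}$, $\mathsf{lastextent}(p)=\{v:p\in\mathsf{last}(v)\}$, extended to sets by union. $N^\odot(P,\alpha)$ is the set of $\odot$-nodes $v$ with $\mathsf{left}(v)\in\mathsf{lastextent}(P)$ and $\mathsf{right}(v)\in\mathsf{firstextent}(\mathsf{Pos}_\alpha)$. The transition tree $T$ of $P$ is the subtree induced by the nodes of $P$ and all their ancestors; a branching node of $T$ has two children in $T$. A node $v$ is $\odot$-live if $v$ is a $\odot$-node and $\mathsf{left}(v)\in\mathsf{lastextent}(P)$. A node $v$ is $\odot$-dominated by $u$ if $u$ is a proper ancestor of $v$ and $\mathsf{first}(\mathsf{right}(v))\subseteq\mathsf{first}(\mathsf{right}(u))$. A node $v$ of $T$ is weakly $\odot$-dominated by $u$ if $u$ is $\odot$-live, $u$ is a proper ancestor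 of $v$, and $\mathsf{first}(v)\subseteq\mathsf{first}(\mathsf{right}(u))$. *)

theory Defs
  imports Main "HOL-Library.Sublist"
begin

text \<open>Regular expressions over an alphabet 'a, identified with their parse trees.
  Nodes of the parse tree are addresses (paths from the root): child 0 is the
  left (or only) child, child 1 the right child.\<close>

datatype 'a rexp = Eps | Sym 'a | Alt "'a rexp" "'a rexp" | Conc "'a rexp" "'a rexp" | Star "'a rexp"

type_synonym node = "nat list"

fun subexp :: "'a rexp \<Rightarrow> node \<Rightarrow> 'a rexp option" where
  "subexp r [] = Some r"
| "subexp (Alt r s) (i # v) = (if i = 0 then subexp r v else if i = 1 then subexp s v else None)"
| "subexp (Conc r s) (i # v) = (if i = 0 then subexp r v else if i = 1 then subexp s v else None)"
| "subexp (Star r) (i # v) = (if i = 0 then subexp r v else None)"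
| "subexp _ (_ # _) = None"

definition nodes :: "'a rexp \<Rightarrow> node set" where
  "nodes R = {v. subexp R v \<noteq> None}"

definition is_conc :: "'a rexp \<Rightarrow> node \<Rightarrow> bool" where
  "is_conc R v \<longleftrightarrow> (\<exists>r s. subexp R v = Some (Conc r s))"

definition left :: "node \<Rightarrow> node" where "left v = v @ [0]"
definition right :: "node \<Rightarrow> node" where "right v = v @ [1]"

definition Pos :: "'a rexp \<Rightarrow> node set" where
  "Pos R = {v. \<exists>a. subexp R v = Some (Sym a)}"

definition PosSym :: "'a rexp \<Rightarrow> 'a \<Rightarrow> node set" where
  "PosSym R a = {v. subexp R v = Some (Sym a)}"

inductive_set starl :: "'b list set \<Rightarrow> 'b list set" for A :: "'b list set" where
  starl_Nil: "[] \<in> starl A"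
| starl_app: "x \<in> A \<Longrightarrow> y \<in> starl A \<Longrightarrow> x @ y \<in> starl A"

text \<open>Sequences of positions generated by a subexpression located at address p.\<close>
fun plang :: "'a rexp \<Rightarrow> node \<Rightarrow> node list set" where
  "plang Eps p = {[]}"
| "plang (Sym a) p = {[p]}"
| "plang (Alt r s) p = plang r (p @ [0]) \<union> plang s (p @ [1])"
| "plang (Conc r s) p = {x @ y | x y. x \<in> plang r (p @ [0]) \<and> y \<in> plang s (p @ [1])}"
| "plang (Star r) p = starl (plang r (p @ [0]))"

definition mlang :: "'a rexp \<Rightarrow> node \<Rightarrow> node list set" where
  "mlang R v = (case subexp R v of None \<Rightarrow> {} | Some r \<Rightarrow> plang r v)"

definition first :: "'a rexp \<Rightarrow> node \<Rightarrow> node set" where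
  "first R v = {hd w | w. w \<in> mlang R v \<and> w \<noteq> []}"

definition lastp :: "'a rexp \<Rightarrow> node \<Rightarrow> node set" where
  "lastp R v = {last w | w. w \<in> mlang R v \<and> w \<noteq> []}"

definition firstextent :: "'a rexp \<Rightarrow> node set \<Rightarrow> node set" where
  "firstextent R P = {v \<in> nodes R. \<exists>p\<in>P. p \<in> first R v}"

definition lastextent :: "'a rexp \<Rightarrow> node set \<Rightarrow> node set" where
  "lastextent R P = {v \<in> nodes R. \<exists>p\<in>P. p \<in> lastp R v}"

definition Nodot :: "'a rexp \<Rightarrow> node set \<Rightarrow> 'a \<Rightarrow> node set" where
  "Nodot R P a = {v. is_conc R v \<and> left v \<in> lastextent R P \<and> right v \<in> firstextent R (PosSym R a)}"

definition ttree :: "node set \<Rightarrow> node set" where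
  "ttree P = {u. \<exists>p\<in>P. prefix u p}"

definition branching :: "node set \<Rightarrow> node \<Rightarrow> bool" where
  "branching P v \<longleftrightarrow> v \<in> ttree P \<and> left v \<in> ttree P \<and> right v \<in> ttree P"

definition odot_live :: "'a rexp \<Rightarrow> node set \<Rightarrow> node \<Rightarrow> bool" where
  "odot_live R P v \<longleftrightarrow> is_conc R v \<and> left v \<in> lastextent R P"

definition odot_dom :: "'a rexp \<Rightarrow> node \<Rightarrow> node \<Rightarrow> bool" where
  "odot_dom R u v \<longleftrightarrow> strict_prefix u v \<and> first R (right v) \<subseteq> first R (right u)"

definition weak_odot_dom :: "'a rexp \<Rightarrow> node set \<Rightarrow> node \<Rightarrow> node \<Rightarrow> bool" where
  "weak_odot_dom R P u v \<longleftrightarrow> v \<in> ttree P \<and> odot_live R P u \<and> strict_prefix u v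
     \<and> first R v \<subseteq> first R (right u)"

end

theory Submission
  imports Defs
begin

lemma starl_pre: "w \<in> starl A \<Longrightarrow> (\<And>u x. u \<in> A \<Longrightarrow> x \<in> set u \<Longrightarrow> Q x) \<Longrightarrow> x \<in> set w \<Longrightarrow> Q x"
  by (induction rule: starl.induct) auto

lemma pre_ext: "prefix (p @ q) x \<Longrightarrow> prefix p x"
  by (metis prefix_order.trans prefixI)

lemma plang_prefix: "w \<in> plang r p \<Longrightarrow> x \<in> set w \<Longrightarrow> prefix p x"
proof (induction r arbitrary: p w x)
  case (Alt r1 r2) then show ?case by simp (metis pre_ext)
next
  case (Conc r1 r2) then show ?case by (auto; metis pre_ext)
next
  case (Star r)
  have "w \<in> starl (plang r (p@[0]))" using Star.prems by simp
  then show ?case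
    by (rule starl_pre[where Q="prefix p"]) (use Star in \<open>auto intro: pre_ext\<close>)
qed auto

lemma plang_ne: "\<exists>w. w \<in> plang r p"
proof (induction r arbitrary: p)
  case (Conc r1 r2)
  then obtain x y where "x \<in> plang r1 (p@[0])" "y \<in> plang r2 (p@[1])" by blast
  then show ?case by auto
next
  case (Star r) then show ?case using starl_Nil by auto
qed auto

lemma plang_pos: "subexp r q = Some (Sym a) \<Longrightarrow> \<exists>w\<in>plang r p. p @ q \<in> set w"
proof (induction r q arbitrary: p rule: subexp.induct)
  case (2 r s i v)
  show ?case
  proof (cases "i = 0")
    case True
    with 2 obtain w where "w \<in> plang r (p@[0])" "p@[0]@v \<in> set w" by fastforce
    then show ?thesis using True by auto
  next
    case False
    with 2 have i: "i = 1" by (auto split: if_splits)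
    with 2 obtain w where "w \<in> plang s (p@[1])" "p@[1]@v \<in> set w" by fastforce
    then show ?thesis using i by auto
  qed
next
  case (3 r s i v)
  show ?case
  proof (cases "i = 0")
    case True
    with 3 obtain w where w: "w \<in> plang r (p@[0])" "p@[0]@v \<in> set w" by fastforce
    obtain y where "y \<in> plang s (p@[1])" using plang_ne by blast
    with w show ?thesis using True by force
  next
    case False
    with 3 have i: "i = 1" by (auto split: if_splits)
    with 3 obtain w where w: "w \<in> plang s (p@[1])" "p@[1]@v \<in> set w" by fastforce
    obtain y where "y \<in> plang r (p@[0])" using plang_ne by blast
    with w show ?thesis using i by force
  qed
next
  case (4 r i v)
  then have i: "i = 0" by (auto split: if_splits)
  with 4 obtain w where w: "w \<in> plang r (p@[0])" "p@[0]@v \<in> set w" by fastforce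
  have "w @ [] \<in> starl (plang r (p@[0]))" by (rule starl_app[OF w(1) starl_Nil])
  with w show ?case using i by force
qed auto

lemma subexp_app: "subexp R (v @ q) = (case subexp R v of None \<Rightarrow> None | Some r \<Rightarrow> subexp r q)"
  by (induction R v rule: subexp.induct) auto

lemma subexp_child: "subexp r (i # rest) \<noteq> None \<Longrightarrow> i = 0 \<or> i = 1"
  by (cases r) (auto split: if_splits)

lemma first_prefix: "x \<in> first R v \<Longrightarrow> prefix v x"
  unfolding first_def mlang_def
  by (auto split: option.splits intro: plang_prefix)

lemma last_prefix: "x \<in> lastp R v \<Longrightarrow> prefix v x"
  unfolding lastp_def mlang_def
  by (auto split: option.splits intro: plang_prefix)

lemma ttree_first_ne:
  assumes "P \<subseteq> Pos R" "v \<in> ttree P" shows "first R v \<noteq> {}"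
proof -
  obtain p where p: "p \<in> P" "prefix v p" using assms(2) unfolding ttree_def by blast
  then obtain q where q: "p = v @ q" by (auto simp: prefix_def)
  obtain a where a: "subexp R p = Some (Sym a)" using p assms(1) unfolding Pos_def by blast
  then obtain r where r: "subexp R v = Some r" "subexp r q = Some (Sym a)"
    using q subexp_app[of R v q] by (auto split: option.splits)
  obtain w where "w \<in> plang r v" "v @ q \<in> set w" using plang_pos[OF r(2)] by blast
  then have "hd w \<in> first R v" unfolding first_def mlang_def using r by auto
  then show ?thesis by blast
qed

lemma ttree_nodes:
  assumes "P \<subseteq> Pos R" "v \<in> ttree P" shows "subexp R v \<noteq> None"
proof -
  obtain p where p: "p \<in> P" "prefix v p" using assms(2) unfolding ttree_def by blast
  then obtain q where q: "p = v @ q" by (auto simp: prefix_def)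
  obtain a where a: "subexp R p = Some (Sym a)" using p assms(1) unfolding Pos_def by blast
  then show ?thesis using q subexp_app[of R v q] by (auto split: option.splits)
qed

lemma part1:
  assumes "odot_live R P v" shows "v \<in> ttree P \<and> left v \<in> ttree P"
proof -
  obtain p where "p \<in> P" "p \<in> lastp R (left v)"
    using assms unfolding odot_live_def lastextent_def by blast
  then have "prefix (left v) p" "p \<in> P" using last_prefix by auto
  moreover have "prefix v (left v)" unfolding left_def by simp
  ultimately show ?thesis unfolding ttree_def using prefix_order.trans by blast
qed

lemma sp_split: "strict_prefix u v \<Longrightarrow> \<exists>i rest. v = u @ i # rest"
  by (metis append_Nil2 neq_Nil_conv prefix_def strict_prefix_def)

lemma no_both: "prefix (u@[0]) x \<Longrightarrow> prefix (u@[1::nat]) x \<Longrightarrow> False"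
proof -
  assume a: "prefix (u@[0]) x" "prefix (u@[1::nat]) x"
  then have "prefix (u@[0]) (u@[1]) \<or> prefix (u@[1]) (u@[0])" using prefix_same_cases by blast
  then show False by (auto simp: prefix_def)
qed

lemma right_in:
  assumes P: "P \<subseteq> Pos R" and sp: "strict_prefix u v" and vt: "v \<in> ttree P"
    and ne: "first R v' \<noteq> {}" and pv: "prefix v v'" and sub: "first R v' \<subseteq> first R (right u)"
  shows "right u \<in> ttree P"
proof -
  obtain i rest where v: "v = u @ i # rest" using sp_split[OF sp] by blast
  have "subexp R v \<noteq> None" using ttree_nodes[OF P vt] .
  then obtain r where "subexp R u = Some r" "subexp r (i # rest) \<noteq> None"
    using subexp_app[of R u "i # rest"] v by (auto split: option.splits)
  then have "i = 0 \<or> i = 1" using subexp_child by blast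
  then show ?thesis
  proof
    assume i: "i = 0"
    obtain x where x: "x \<in> first R v'" using ne by blast
    then have "prefix v x" using first_prefix pv prefix_order.trans by blast
    then have "prefix (u@[0]) x" using v i prefix_order.trans[of "u@[0]" v x] by auto
    moreover have "prefix (u@[1]) x" using x sub first_prefix unfolding right_def by blast
    ultimately show ?thesis using no_both by blast
  next
    assume i: "i = 1"
    obtain p where "p \<in> P" "prefix v p" using vt unfolding ttree_def by blast
    moreover have "prefix (right u) v" using v i unfolding right_def by auto
    ultimately show ?thesis unfolding ttree_def using prefix_order.trans by blast
  qed
qed

theorem lemma6:
  fixes R :: "'a rexp" and P :: "node set" and \<alpha> :: 'a
  assumes "P \<subseteq> Pos R"
  shows "(\<forall>v. odot_live R P v \<longrightarrow> v \<in> ttree P \<and> left v \<in> ttree P)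
       \<and> (\<forall>u v. odot_live R P u \<and> v \<in> Nodot R P \<alpha> \<and> odot_dom R u v \<longrightarrow> branching P u)
       \<and> (\<forall>u v. branching P v \<and> weak_odot_dom R P u v \<longrightarrow> branching P u)"
proof -
  have A: "\<forall>v. odot_live R P v \<longrightarrow> v \<in> ttree P \<and> left v \<in> ttree P" using part1 by blast
  have B: "\<forall>u v. odot_live R P u \<and> v \<in> Nodot R P \<alpha> \<and> odot_dom R u v \<longrightarrow> branching P u"
  proof (intro allI impI)
    fix u v assume a: "odot_live R P u \<and> v \<in> Nodot R P \<alpha> \<and> odot_dom R u v"
    then have vl: "odot_live R P v" unfolding Nodot_def odot_live_def by blast
    have ne: "first R (right v) \<noteq> {}" using a unfolding Nodot_def firstextent_def by blast
    have "right u \<in> ttree P"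
      using right_in[OF assms _ conjunct1[OF part1[OF vl]] ne] a
      unfolding odot_dom_def right_def by auto
    then show "branching P u" using part1 a unfolding branching_def by blast
  qed
  have C: "\<forall>u v. branching P v \<and> weak_odot_dom R P u v \<longrightarrow> branching P u"
  proof (intro allI impI)
    fix u v assume a: "branching P v \<and> weak_odot_dom R P u v"
    then have vt: "v \<in> ttree P" unfolding branching_def by blast
    have "right u \<in> ttree P"
      using right_in[OF assms _ vt ttree_first_ne[OF assms vt]] a
      unfolding weak_odot_dom_def by auto
    then show "branching P u" using part1 a unfolding branching_def weak_odot_dom_def by blast
  qed
  show ?thesis using A B C by blast
qed

end
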